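(* For every $\alpha\in\mathbb{R}$, the function $r_\alpha:\mathbb{R}\to\mathbb{R}$, $r_\alpha(x)=\alpha f(x)^2+2g(x)$, has a unique maximizer $c$, and $c$ is the unique real solution of the fixed point equation $x=\alpha f(x)$.
   Context: With $Z\sim\mathcal N(0,1)$ and $(y)_+=\max(y,0)$: $d(x)=\mathbb E(Z+x)_+^2$, $f(x)=\mathbb E(Z+x)_+/\sqrt{d(x)}$, $g(x)=\mathbb E\,Z(Z+x)_+/\sqrt{d(x)}$. *)

theory Defs
  imports "HOL-Probability.Probability"
begin

text \<open>Expectations over Z ~ N(0,1), written as Lebesgue integrals against the standard normal density.\<close>

definition pos_part :: "real \<Rightarrow> real" where
  "pos_part y = max y 0"

definition dG :: "real \<Rightarrow> real" where
  "dG x = (\<integral>z. std_normal_density z * (pos_part (z + x))\<^sup>2 \<partial>lborel)"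

definition fG :: "real \<Rightarrow> real" where
  "fG x = (\<integral>z. std_normal_density z * pos_part (z + x) \<partial>lborel) / sqrt (dG x)"

definition gG :: "real \<Rightarrow> real" where
  "gG x = (\<integral>z. std_normal_density z * (z * pos_part (z + x)) \<partial>lborel) / sqrt (dG x)"

definition rG :: "real \<Rightarrow> real \<Rightarrow> real" where
  "rG \<alpha> x = \<alpha> * (fG x)\<^sup>2 + 2 * gG x"

end

theory Submission
  imports Defs "HOL-Real_Asymp.Real_Asymp"
begin


lemma phi_deriv: "(std_normal_density has_real_derivative (- x * std_normal_density x)) (at x)"
  unfolding std_normal_density_def
  by (auto intro!: derivative_eq_intros simp: power2_eq_square field_simps)

lemma phi_cont[continuous_intros]: "isCont std_normal_density x"
  using phi_deriv DERIV_isCont by blast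

lemma phi_pos: "std_normal_density x > 0"
  by (simp add: normal_density_pos)

lemma phi_even: "std_normal_density (-x) = std_normal_density x"
  unfolding std_normal_density_def by simp

lemma phi_lim: "(std_normal_density \<longlongrightarrow> 0) at_top"
  unfolding std_normal_density_def by real_asymp

lemma xphi_lim: "((\<lambda>x. x * std_normal_density x) \<longlongrightarrow> 0) at_top"
  unfolding std_normal_density_def by real_asymp

lemma phi_lim_bot: "(std_normal_density \<longlongrightarrow> 0) at_bot"
  unfolding std_normal_density_def by real_asymp

lemma int_mom: "integrable lborel (\<lambda>z. indicator A z * (std_normal_density z * z ^ k))" if "A \<in> sets lborel"
  using integrable_mult_indicator[OF that integrable_std_normal_moment, of k] by simp

lemma I1: "(\<integral>z. indicator {a<..} z * (std_normal_density z * z) \<partial>lborel) = std_normal_density a"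
proof -
  have si: "set_integrable lborel (einterval (ereal a) \<infinity>) (\<lambda>z. std_normal_density z * z)"
    unfolding set_integrable_def using int_mom[of "{a<..}" 1] by simp
  have "(LBINT z=ereal a..\<infinity>. std_normal_density z * z) = 0 - (- std_normal_density a)"
  proof (rule interval_integral_FTC_integrable[OF _ _ _ si])
    show "ereal a < \<infinity>" by simp
    show "((\<lambda>x. - std_normal_density x) has_vector_derivative std_normal_density x * x) (at x)" for x
      using phi_deriv[of x] DERIV_minus[OF phi_deriv[of x]]
      by (simp add: has_real_derivative_iff_has_vector_derivative[symmetric] mult.commute)
    show "isCont (\<lambda>z. std_normal_density z * z) x" for x by (intro continuous_intros)
    show "(((\<lambda>x. - std_normal_density x) \<circ> real_of_ereal) \<longlongrightarrow> - std_normal_density a) (at_right (ereal a))"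
      unfolding ereal_tendsto_simps
      by (intro tendsto_intros tendsto_within_subset[OF isCont_tendsto_compose[OF phi_cont]]) auto
    show "(((\<lambda>x. - std_normal_density x) \<circ> real_of_ereal) \<longlongrightarrow> 0) (at_left \<infinity>)"
      unfolding ereal_tendsto_simps using tendsto_minus[OF phi_lim] by simp
  qed
  then show ?thesis
    by (simp add: interval_integral_to_infinity_eq set_lebesgue_integral_def)
qed

definition Q :: "real \<Rightarrow> real" where
  "Q a = (\<integral>z. indicator {a<..} z * std_normal_density z \<partial>lborel)"

lemma Q_interval: "Q a = (LBINT z=ereal a..\<infinity>. std_normal_density z)"
  by (simp add: Q_def interval_integral_to_infinity_eq set_lebesgue_integral_def)

lemma Q_split: "Q a = (LBINT z=ereal 0..\<infinity>. std_normal_density z) - (LBINT z=ereal 0..ereal a. std_normal_density z)"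
proof -
  have "interval_lebesgue_integrable lborel (min (ereal a) (min 0 \<infinity>)) (max (ereal a) (max 0 \<infinity>)) std_normal_density"
    unfolding interval_lebesgue_integrable_def set_integrable_def
    using int_mom[of "einterval (min (ereal a) 0) \<infinity>" 0] by simp
  from interval_integral_sum[OF this] show ?thesis
    unfolding Q_interval using interval_integral_endpoints_reverse[of "ereal a" 0 std_normal_density]
    by (simp add: zero_ereal_def)
qed

lemma Q_deriv: "(Q has_real_derivative (- std_normal_density a)) (at a)"
proof -
  define lo where "lo = min a 0 - 1"
  define hi where "hi = max a 0 + 1"
  have "((\<lambda>u. LBINT y=ereal 0..ereal u. std_normal_density y) has_vector_derivative (std_normal_density a)) (at a within {lo..hi})"
    by (rule interval_integral_FTC2[of lo 0 hi]) (auto simp: lo_def hi_def intro!: continuous_at_imp_continuous_on phi_cont)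
  moreover have "at a within {lo..hi} = at a"
    by (rule at_within_Icc_at) (auto simp: lo_def hi_def)
  ultimately have "((\<lambda>u. LBINT y=ereal 0..ereal u. std_normal_density y) has_real_derivative (std_normal_density a)) (at a)"
    by (simp add: has_real_derivative_iff_has_vector_derivative)
  then have "((\<lambda>u. (LBINT z=ereal 0..\<infinity>. std_normal_density z) - (LBINT y=ereal 0..ereal u. std_normal_density y)) has_real_derivative (0 - std_normal_density a)) (at a)"
    by (intro derivative_intros)
  moreover have "Q = (\<lambda>u. (LBINT z=ereal 0..\<infinity>. std_normal_density z) - (LBINT y=ereal 0..ereal u. std_normal_density y))"
    by (rule ext) (rule Q_split)
  ultimately show ?thesis by simp
qed


lemma Q_nonneg: "0 \<le> Q a"
  unfolding Q_def by (rule integral_nonneg_AE) (rule AE_I2, simp add: indicator_def)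
lemma Q_le1: "Q a \<le> 1"
proof -
  have "Q a \<le> (\<integral>z. std_normal_density z \<partial>lborel)"
    unfolding Q_def
  proof (rule integral_mono)
    show "integrable lborel (\<lambda>z. indicator {a<..} z * std_normal_density z)"
      using int_mom[of "{a<..}" 0] by simp
    show "integrable lborel std_normal_density" by simp
    show "indicator {a<..} z * std_normal_density z \<le> std_normal_density z" for z
      by (simp add: indicator_def)
  qed
  then show ?thesis by simp
qed
lemma Q_tail: "a > 0 \<Longrightarrow> a * Q a \<le> std_normal_density a"
proof -
  assume a: "a > 0"
  have "a * Q a = (\<integral>z. indicator {a<..} z * (a * std_normal_density z) \<partial>lborel)"
    unfolding Q_def integral_mult_right_zero[symmetric] by (simp add: mult.left_commute)
  also have "\<dots> \<le> (\<integral>z. indicator {a<..} z * (std_normal_density z * z) \<partial>lborel)"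
  proof (rule integral_mono)
    show "integrable lborel (\<lambda>z. indicator {a<..} z * (a * std_normal_density z))"
    proof -
      have "integrable lborel (\<lambda>z. a * (indicator {a<..} z * (std_normal_density z * z^0)))"
        by (rule integrable_mult_right[OF int_mom]) simp
      then show ?thesis by (simp add: mult.left_commute)
    qed
    show "integrable lborel (\<lambda>z. indicator {a<..} z * (std_normal_density z * z))"
      using int_mom[of "{a<..}" 1] by simp
    show "indicator {a<..} z * (a * std_normal_density z) \<le> indicator {a<..} z * (std_normal_density z * z)" for z
    proof (cases "a < z")
      case True
      then have "a * std_normal_density z \<le> z * std_normal_density z"
        by (intro mult_right_mono) auto
      then show ?thesis using True by (simp add: mult.commute)
    qed simp
  qed
  also have "\<dots> = std_normal_density a" by (rule I1)
  finally show ?thesis .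
qed

lemma Q_lim: "(Q \<longlongrightarrow> 0) at_top"
proof (rule tendsto_sandwich[of "\<lambda>_. 0" _ _ "\<lambda>a. std_normal_density a / a"])
  show "\<forall>\<^sub>F n in at_top. 0 \<le> Q n" by (simp add: Q_nonneg)
  show "\<forall>\<^sub>F n in at_top. Q n \<le> std_normal_density n / n"
    using eventually_gt_at_top[of 0]
  proof eventually_elim
    case (elim n)
    then show ?case using Q_tail[of n] by (simp add: pos_le_divide_eq mult_ac)
  qed
  show "((\<lambda>a. std_normal_density a / a) \<longlongrightarrow> 0) at_top"
    using tendsto_mult[OF phi_lim tendsto_inverse_0_at_top[OF filterlim_ident]]
    by (simp add: divide_inverse)
qed simp

lemma Q_pos: "0 < Q a"
proof -
  have "Q (a + 1) < Q a"
  proof (rule DERIV_neg_imp_decreasing[of a "a+1" Q])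
    fix x show "\<exists>y. (Q has_real_derivative y) (at x) \<and> y < 0"
      using Q_deriv[of x] phi_pos[of x] by (intro exI[of _ "- std_normal_density x"]) simp
  qed simp
  then show ?thesis using Q_nonneg[of "a+1"] by simp
qed

lemma Q_cont: "isCont Q a"
  using Q_deriv DERIV_isCont by blast

lemma I2: "(\<integral>z. indicator {a<..} z * (std_normal_density z * z^2) \<partial>lborel) = a * std_normal_density a + Q a"
proof -
  have si: "set_integrable lborel (einterval (ereal a) \<infinity>) (\<lambda>z. std_normal_density z * z^2)"
    unfolding set_integrable_def using int_mom[of "{a<..}" 2] by simp
  have "(LBINT z=ereal a..\<infinity>. std_normal_density z * z^2) = 0 - (- a * std_normal_density a - Q a)"
  proof (rule interval_integral_FTC_integrable[OF _ _ _ si])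
    show "ereal a < \<infinity>" by simp
    show "((\<lambda>x. - x * std_normal_density x - Q x) has_vector_derivative std_normal_density x * x^2) (at x)" for x
    proof -
      have d1: "((\<lambda>x. - x) has_real_derivative - 1) (at x)"
        by (auto intro!: derivative_eq_intros)
      have eq: "(- 1 * std_normal_density x + (- x * std_normal_density x) * (- x)) - (- std_normal_density x)
          = std_normal_density x * x^2"
        by (simp add: power2_eq_square)
      have "((\<lambda>x. - x * std_normal_density x - Q x) has_real_derivative std_normal_density x * x^2) (at x)"
        unfolding eq[symmetric] by (rule DERIV_diff[OF DERIV_mult[OF d1 phi_deriv] Q_deriv])
      then show ?thesis unfolding has_real_derivative_iff_has_vector_derivative .
    qed
    show "isCont (\<lambda>z. std_normal_density z * z^2) x" for x by (intro continuous_intros)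
    show "(((\<lambda>x. - x * std_normal_density x - Q x) \<circ> real_of_ereal) \<longlongrightarrow> - a * std_normal_density a - Q a) (at_right (ereal a))"
    proof -
      have "isCont (\<lambda>x. - x * std_normal_density x - Q x) a"
        by (intro continuous_intros Q_cont)
      then have "((\<lambda>x. - x * std_normal_density x - Q x) \<longlongrightarrow> - a * std_normal_density a - Q a) (at_right a)"
        unfolding isCont_def by (rule tendsto_within_subset) simp
      then show ?thesis unfolding ereal_tendsto_simps .
    qed
    show "(((\<lambda>x. - x * std_normal_density x - Q x) \<circ> real_of_ereal) \<longlongrightarrow> 0) (at_left \<infinity>)"
      unfolding ereal_tendsto_simps using tendsto_diff[OF tendsto_minus[OF xphi_lim] Q_lim] by simp
  qed
  then show ?thesis
    by (simp add: interval_integral_to_infinity_eq set_lebesgue_integral_def)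
qed



definition Phi :: "real \<Rightarrow> real" where "Phi x = Q (- x)"

lemma Phi_deriv: "(Phi has_real_derivative std_normal_density x) (at x)"
proof -
  have "((\<lambda>x. Q (- x)) has_real_derivative (- std_normal_density (- x)) * (- 1)) (at x)"
    by (rule DERIV_chain2[OF Q_deriv]) (auto intro!: derivative_eq_intros)
  then show ?thesis by (simp add: Phi_def[abs_def] phi_even)
qed

lemma Phi_pos: "0 < Phi x" by (simp add: Phi_def Q_pos)
lemma Phi_le1: "Phi x \<le> 1" by (simp add: Phi_def Q_le1)

lemma pos_part_ind: "pos_part (z + x) = indicator {-x<..} z * (z + x)"
  by (auto simp: pos_part_def indicator_def)

lemma m_closed: "(\<integral>z. std_normal_density z * pos_part (z + x) \<partial>lborel) = x * Phi x + std_normal_density x"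
proof -
  let ?A = "{-x<..}"
  have i0: "integrable lborel (\<lambda>z. indicator ?A z * std_normal_density z)"
    using int_mom[of ?A 0] by simp
  have i1: "integrable lborel (\<lambda>z. indicator ?A z * (std_normal_density z * z))"
    using int_mom[of ?A 1] by simp
  have "(\<lambda>z. std_normal_density z * pos_part (z + x)) =
        (\<lambda>z. indicator ?A z * (std_normal_density z * z) + x * (indicator ?A z * std_normal_density z))"
    by (rule ext) (simp add: pos_part_ind algebra_simps)
  then have "(\<integral>z. std_normal_density z * pos_part (z + x) \<partial>lborel) =
     (\<integral>z. indicator ?A z * (std_normal_density z * z) \<partial>lborel) + x * (\<integral>z. indicator ?A z * std_normal_density z \<partial>lborel)"
    using i0 i1 by (simp add: Bochner_Integration.integral_add)
  also have "\<dots> = std_normal_density x + x * Phi x"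
    by (simp add: I1 phi_even Phi_def Q_def)
  finally show ?thesis by simp
qed

lemma d_closed: "dG x = x * std_normal_density x + (1 + x^2) * Phi x"
proof -
  let ?A = "{-x<..}"
  have i0: "integrable lborel (\<lambda>z. indicator ?A z * std_normal_density z)"
    using int_mom[of ?A 0] by simp
  have i1: "integrable lborel (\<lambda>z. indicator ?A z * (std_normal_density z * z))"
    using int_mom[of ?A 1] by simp
  have i2: "integrable lborel (\<lambda>z. indicator ?A z * (std_normal_density z * z^2))"
    using int_mom[of ?A 2] by simp
  have "(\<lambda>z. std_normal_density z * (pos_part (z + x))\<^sup>2) =
        (\<lambda>z. indicator ?A z * (std_normal_density z * z^2) + ((2 * x) * (indicator ?A z * (std_normal_density z * z))
           + x^2 * (indicator ?A z * std_normal_density z)))"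
    by (rule ext) (simp add: pos_part_ind power2_eq_square algebra_simps indicator_def)
  then have "dG x =
     (\<integral>z. indicator ?A z * (std_normal_density z * z^2) \<partial>lborel) + ((2 * x) * (\<integral>z. indicator ?A z * (std_normal_density z * z) \<partial>lborel)
     + x^2 * (\<integral>z. indicator ?A z * std_normal_density z \<partial>lborel))"
    unfolding dG_def using i0 i1 i2 by (simp add: Bochner_Integration.integral_add)
  also have "\<dots> = (- x) * std_normal_density x + Phi x + 2 * x * std_normal_density x + x^2 * Phi x"
    by (simp add: I1 I2 phi_even Phi_def Q_def)
  finally show ?thesis by (simp add: algebra_simps)
qed

lemma n_closed: "(\<integral>z. std_normal_density z * (z * pos_part (z + x)) \<partial>lborel) = Phi x"
proof -
  let ?A = "{-x<..}"
  have i1: "integrable lborel (\<lambda>z. indicator ?A z * (std_normal_density z * z))"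
    using int_mom[of ?A 1] by simp
  have i2: "integrable lborel (\<lambda>z. indicator ?A z * (std_normal_density z * z^2))"
    using int_mom[of ?A 2] by simp
  have "(\<lambda>z. std_normal_density z * (z * pos_part (z + x))) =
        (\<lambda>z. indicator ?A z * (std_normal_density z * z^2) + x * (indicator ?A z * (std_normal_density z * z)))"
    by (rule ext) (simp add: pos_part_ind power2_eq_square algebra_simps indicator_def)
  then have "(\<integral>z. std_normal_density z * (z * pos_part (z + x)) \<partial>lborel) =
     (\<integral>z. indicator ?A z * (std_normal_density z * z^2) \<partial>lborel) + x * (\<integral>z. indicator ?A z * (std_normal_density z * z) \<partial>lborel)"
    using i1 i2 by (simp add: Bochner_Integration.integral_add)
  also have "\<dots> = Phi x"
    by (simp add: I1 I2 phi_even Phi_def Q_def)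
  finally show ?thesis .
qed

lemma Phi_deriv_eq: "f' = std_normal_density x \<Longrightarrow> (Phi has_real_derivative f') (at x within s)"
  using Phi_deriv has_field_derivative_at_within by blast

lemma phi_deriv_eq: "f' = - x * std_normal_density x \<Longrightarrow> (std_normal_density has_real_derivative f') (at x within s)"
  using phi_deriv has_field_derivative_at_within by blast

definition M :: "real \<Rightarrow> real" where "M x = x * Phi x + std_normal_density x"
definition D :: "real \<Rightarrow> real" where "D x = x * std_normal_density x + (1 + x^2) * Phi x"
definition U :: "real \<Rightarrow> real" where "U x = (Phi x)^2 - std_normal_density x * M x"

lemma M_deriv: "(M has_real_derivative Phi x) (at x)"
  unfolding M_def[abs_def]
  by (auto intro!: derivative_eq_intros Phi_deriv_eq phi_deriv_eq)

lemma D_deriv: "(D has_real_derivative 2 * M x) (at x)"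
  unfolding D_def[abs_def] M_def
  by (auto intro!: derivative_eq_intros Phi_deriv_eq phi_deriv_eq simp: algebra_simps power2_eq_square)

lemma U_deriv: "(U has_real_derivative std_normal_density x * D x) (at x)"
  unfolding U_def[abs_def] M_def D_def
  by (auto intro!: derivative_eq_intros Phi_deriv_eq phi_deriv_eq simp: algebra_simps power2_eq_square)

lemma M_nonneg: "0 \<le> M x"
proof -
  have "0 \<le> (\<integral>z. std_normal_density z * pos_part (z + x) \<partial>lborel)"
    by (rule integral_nonneg_AE) (rule AE_I2, simp add: pos_part_def)
  then show ?thesis using m_closed by (simp add: M_def)
qed

lemma D_nonneg: "0 \<le> D x"
proof -
  have "0 \<le> dG x" unfolding dG_def
    by (rule integral_nonneg_AE) (rule AE_I2, simp)
  then show ?thesis using d_closed by (simp add: D_def)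
qed

lemma M_pos: "0 < M x"
proof -
  have "M (x - 1) < M x"
  proof (rule DERIV_pos_imp_increasing[of "x - 1" x M])
    fix t show "\<exists>y. (M has_real_derivative y) (at t) \<and> 0 < y"
      using M_deriv[of t] Phi_pos[of t] by blast
  qed simp
  then show ?thesis using M_nonneg[of "x - 1"] by simp
qed

lemma D_pos: "0 < D x"
proof -
  have "D (x - 1) < D x"
  proof (rule DERIV_pos_imp_increasing[of "x - 1" x D])
    fix t show "\<exists>y. (D has_real_derivative y) (at t) \<and> 0 < y"
      using D_deriv[of t] M_pos[of t] by (intro exI[of _ "2 * M t"]) simp
  qed simp
  then show ?thesis using D_nonneg[of "x - 1"] by simp
qed

lemma Phi_lim_bot: "(Phi \<longlongrightarrow> 0) at_bot"
proof -
  have "((\<lambda>x. Q (- x)) \<longlongrightarrow> 0) at_bot"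
    by (rule filterlim_compose[OF Q_lim filterlim_uminus_at_top_at_bot])
  then show ?thesis by (simp add: Phi_def[abs_def])
qed

lemma M_lim_bot: "(M \<longlongrightarrow> 0) at_bot"
proof (rule tendsto_sandwich[of "\<lambda>_. 0" _ _ std_normal_density])
  show "\<forall>\<^sub>F n in at_bot. 0 \<le> M n" by (simp add: M_nonneg)
  show "\<forall>\<^sub>F n in at_bot. M n \<le> std_normal_density n"
    using eventually_le_at_bot[of 0]
  proof eventually_elim
    case (elim n)
    then have "n * Phi n \<le> 0" using Phi_pos[of n] by (simp add: mult_nonpos_nonneg)
    then show ?case by (simp add: M_def)
  qed
qed (simp_all add: phi_lim_bot)

lemma U_lim_bot: "(U \<longlongrightarrow> 0) at_bot"
proof -
  have "((\<lambda>x. (Phi x)^2 - std_normal_density x * M x) \<longlongrightarrow> 0^2 - 0 * 0) at_bot"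
    by (intro tendsto_intros Phi_lim_bot phi_lim_bot M_lim_bot)
  then show ?thesis by (simp add: U_def[abs_def])
qed

lemma U_pos: "0 < U x"
proof -
  have inc: "U a < U b" if "a < b" for a b
  proof (rule DERIV_pos_imp_increasing[OF that])
    fix t show "\<exists>y. (U has_real_derivative y) (at t) \<and> 0 < y"
      using U_deriv[of t] phi_pos[of t] D_pos[of t] by (intro exI[of _ "std_normal_density t * D t"]) simp
  qed
  have "0 \<le> U (x - 1)"
  proof (rule tendsto_le[OF trivial_limit_at_bot_linorder tendsto_const U_lim_bot])
    show "\<forall>\<^sub>F y in at_bot. U y \<le> U (x - 1)"
      using eventually_le_at_bot[of "x - 1"]
      by eventually_elim (use inc in \<open>force simp: le_less\<close>)
  qed
  then show ?thesis using inc[of "x - 1" x] by simp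
qed



lemma U_alt1: "Phi x * D x - (M x)^2 = U x"
  by (simp add: U_def D_def M_def power2_eq_square algebra_simps)

lemma U_alt2: "std_normal_density x * D x - Phi x * M x = - x * U x"
  by (simp add: U_def D_def M_def power2_eq_square algebra_simps)

lemma M_deriv_eq: "f' = Phi x \<Longrightarrow> (M has_real_derivative f') (at x within s)"
  using M_deriv has_field_derivative_at_within by blast

lemma D_deriv_eq: "f' = 2 * M x \<Longrightarrow> (D has_real_derivative f') (at x within s)"
  using D_deriv has_field_derivative_at_within by blast

lemma fG_eq: "fG x = M x / sqrt (D x)"
  by (simp add: fG_def m_closed M_def d_closed D_def)

lemma gG_eq: "gG x = Phi x / sqrt (D x)"
  by (simp add: gG_def n_closed d_closed D_def)

lemma sqrtD_deriv: "((\<lambda>x. sqrt (D x)) has_real_derivative inverse (sqrt (D x)) / 2 * (2 * M x)) (at x)"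
  by (rule DERIV_chain2[OF DERIV_real_sqrt[OF D_pos] D_deriv])

lemma F_deriv: "((\<lambda>x. M x / sqrt (D x)) has_real_derivative U x / (D x * sqrt (D x))) (at x)"
proof -
  have Dp: "0 < D x" by (rule D_pos)
  define s where "s = sqrt (D x)"
  have s: "0 < s" "D x = s^2" using Dp by (auto simp: s_def)
  have raw: "((\<lambda>x. M x / sqrt (D x)) has_real_derivative
     (Phi x * sqrt (D x) - M x * (inverse (sqrt (D x)) / 2 * (2 * M x))) / (sqrt (D x) * sqrt (D x))) (at x)"
    by (rule DERIV_divide[OF M_deriv sqrtD_deriv]) (use Dp in simp)
  have eq: "(Phi x * sqrt (D x) - M x * (inverse (sqrt (D x)) / 2 * (2 * M x))) / (sqrt (D x) * sqrt (D x))
      = U x / (D x * sqrt (D x))"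
    unfolding s_def[symmetric] U_alt1[symmetric] using s
    by (simp add: field_simps power2_eq_square)
  show ?thesis using raw unfolding eq .
qed

lemma G_deriv: "((\<lambda>x. Phi x / sqrt (D x)) has_real_derivative - x * U x / (D x * sqrt (D x))) (at x)"
proof -
  have Dp: "0 < D x" by (rule D_pos)
  define s where "s = sqrt (D x)"
  have s: "0 < s" "D x = s^2" using Dp by (auto simp: s_def)
  have raw: "((\<lambda>x. Phi x / sqrt (D x)) has_real_derivative
     (std_normal_density x * sqrt (D x) - Phi x * (inverse (sqrt (D x)) / 2 * (2 * M x))) / (sqrt (D x) * sqrt (D x))) (at x)"
    by (rule DERIV_divide[OF Phi_deriv sqrtD_deriv]) (use Dp in simp)
  have eq: "(std_normal_density x * sqrt (D x) - Phi x * (inverse (sqrt (D x)) / 2 * (2 * M x))) / (sqrt (D x) * sqrt (D x))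
      = - x * U x / (D x * sqrt (D x))"
    unfolding s_def[symmetric] U_alt2[symmetric] using s
    by (simp add: field_simps power2_eq_square)
  show ?thesis using raw unfolding eq .
qed

lemma rG_eq: "rG a = (\<lambda>x. a * ((M x / sqrt (D x)) * (M x / sqrt (D x))) + 2 * (Phi x / sqrt (D x)))"
  by (rule ext) (simp add: rG_def fG_eq gG_eq power2_eq_square)

lemma R_deriv: "(rG a has_real_derivative 2 * U x / (D x * sqrt (D x)) * (a * fG x - x)) (at x)"
proof -
  have raw: "(rG a has_real_derivative
     a * (U x / (D x * sqrt (D x)) * (M x / sqrt (D x)) + U x / (D x * sqrt (D x)) * (M x / sqrt (D x)))
      + 2 * (- x * U x / (D x * sqrt (D x)))) (at x)"
    unfolding rG_eq
    by (intro DERIV_add DERIV_cmult DERIV_mult F_deriv G_deriv)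
  have eq: "a * (U x / (D x * sqrt (D x)) * (M x / sqrt (D x)) + U x / (D x * sqrt (D x)) * (M x / sqrt (D x)))
      + 2 * (- x * U x / (D x * sqrt (D x))) = 2 * U x / (D x * sqrt (D x)) * (a * fG x - x)"
  proof -
    have Dp: "0 < D x" by (rule D_pos)
    define s where "s = sqrt (D x)"
    have s: "0 < s" "D x = s^2" using Dp by (auto simp: s_def)
    show ?thesis unfolding fG_eq s_def[symmetric] using s by (simp add: field_simps power2_eq_square)
  qed
  show ?thesis using raw unfolding eq .
qed

lemma fG_deriv: "(fG has_real_derivative U x / (D x * sqrt (D x))) (at x)"
proof -
  have "fG = (\<lambda>x. M x / sqrt (D x))" by (rule ext) (rule fG_eq)
  then show ?thesis using F_deriv by simp
qed

lemma fG_pos: "0 < fG x"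
  unfolding fG_eq using M_pos D_pos by simp

lemma fG_le1: "fG x \<le> 1"
proof -
  have "(M x)^2 < Phi x * D x" using U_alt1[of x] U_pos[of x] by simp
  also have "\<dots> \<le> D x" using Phi_le1[of x] D_pos[of x] by (simp add: mult_le_cancel_right1)
  finally have "M x \<le> sqrt (D x)" by (intro real_le_rsqrt) simp
  then show ?thesis unfolding fG_eq using D_pos[of x] by simp
qed

lemma fG_mono: "x < y \<Longrightarrow> fG x < fG y"
proof (rule DERIV_pos_imp_increasing[of x y fG])
  fix t show "\<exists>y. (fG has_real_derivative y) (at t) \<and> 0 < y"
    using fG_deriv[of t] U_pos[of t] D_pos[of t]
    by (intro exI[of _ "U t / (D t * sqrt (D t))"]) simp
qed

lemma fG_cont: "isCont fG x"
  using fG_deriv DERIV_isCont by blast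



lemma key_ineq: "0 < t \<Longrightarrow> t * U t < M t * D t"
proof -
  assume t: "0 < t"
  have "M t * D t - t * U t = t * (M t)^2 + Phi t * std_normal_density t + t * std_normal_density t * M t"
    by (simp add: U_def D_def M_def algebra_simps power2_eq_square)
  moreover have "0 < t * (M t)^2 + Phi t * std_normal_density t + t * std_normal_density t * M t"
    using t M_pos[of t] Phi_pos[of t] phi_pos[of t]
    by (intro add_pos_pos mult_pos_pos) auto
  ultimately show ?thesis by simp
qed

lemma ratio_dec: "0 < x \<Longrightarrow> x < y \<Longrightarrow> fG y / y < fG x / x"
proof -
  assume xy: "0 < x" "x < y"
  have "- (fG x / x) < - (fG y / y)"
  proof (rule DERIV_pos_imp_increasing[of x y "\<lambda>t. - (fG t / t)"])
    fix t assume t: "x \<le> t" "t \<le> y"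
    then have tp: "0 < t" using xy by simp
    have Dp: "0 < D t" by (rule D_pos)
    have raw: "((\<lambda>t. - (fG t / t)) has_real_derivative
       - ((U t / (D t * sqrt (D t)) * t - fG t * 1) / (t * t))) (at t)"
      by (intro DERIV_minus DERIV_divide fG_deriv DERIV_ident) (use tp in simp)
    have "U t / (D t * sqrt (D t)) * t - fG t * 1 = (t * U t - M t * D t) / (D t * sqrt (D t))"
    proof -
      have "sqrt (D t) > 0" using Dp by simp
      then show ?thesis unfolding fG_eq using Dp by (simp add: field_simps)
    qed
    also have "\<dots> < 0"
      by (rule divide_neg_pos) (use key_ineq[OF tp] Dp in auto)
    finally have "0 < - ((U t / (D t * sqrt (D t)) * t - fG t * 1) / (t * t))"
      using tp by (simp add: divide_neg_pos)
    then show "\<exists>y. ((\<lambda>t. - (fG t / t)) has_real_derivative y) (at t) \<and> 0 < y"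
      using raw by blast
  qed (use xy in simp)
  then show ?thesis by simp
qed

lemma fixpoint_exists: "\<exists>c. c = a * fG c"
proof -
  let ?h = "\<lambda>x. x - a * fG x"
  let ?b = "\<bar>a\<bar> + 1"
  have bnd: "\<bar>a * fG x\<bar> \<le> \<bar>a\<bar>" for x
    using fG_pos[of x] fG_le1[of x] mult_left_le[of "fG x" "\<bar>a\<bar>"] by (simp add: abs_mult)
  have "\<exists>x. - ?b \<le> x \<and> x \<le> ?b \<and> ?h x = 0"
  proof (rule IVT')
    show "?h (- ?b) \<le> 0" using bnd[of "- ?b"] by (simp add: abs_le_iff)
    show "0 \<le> ?h ?b" using bnd[of "?b"] by (simp add: abs_le_iff)
    show "- ?b \<le> ?b" by simp
    show "continuous_on {- ?b..?b} ?h"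
      by (intro continuous_at_imp_continuous_on ballI continuous_intros fG_cont)
  qed
  then show ?thesis by auto
qed

lemma sign_structure:
  assumes c: "c = a * fG c"
  shows "\<And>x. x < c \<Longrightarrow> x < a * fG x" and "\<And>x. c < x \<Longrightarrow> a * fG x < x"
proof -
  fix x
  consider "a \<le> 0" | "0 < a" by linarith
  note cases = this
  {
    assume "x < c"
    show "x < a * fG x"
    proof (cases rule: cases)
      case 1
      have "a * fG c \<le> a * fG x"
        using fG_mono[OF \<open>x < c\<close>] 1 by (simp add: mult_left_mono_neg)
      then show ?thesis using c \<open>x < c\<close> by linarith
    next
      case 2
      have "0 < a * fG c" using 2 fG_pos[of c] by simp
      then have cp: "0 < c" using c by linarith
      show ?thesis
      proof (cases "x \<le> 0")
        case True
        have "0 < a * fG x" using 2 fG_pos[of x] by simp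
        then show ?thesis using True by linarith
      next
        case False
        then have xp: "0 < x" by simp
        have "fG c / c < fG x / x" by (rule ratio_dec[OF xp \<open>x < c\<close>])
        then have "x * fG c < c * fG x" using xp cp by (simp add: field_simps)
        then have "a * (x * fG c) < a * (c * fG x)" using 2 by simp
        moreover have "a * (x * fG c) = x * c"
          by (simp only: mult.left_commute[of a x] c[symmetric])
        moreover have "a * (c * fG x) = c * (a * fG x)" by (simp add: mult.left_commute)
        ultimately have "x * c < c * (a * fG x)" by simp
        then show ?thesis using cp by (simp add: mult.commute)
      qed
    qed
  }
  {
    assume "c < x"
    show "a * fG x < x"
    proof (cases rule: cases)
      case 1
      have "a * fG x \<le> a * fG c"
        using fG_mono[OF \<open>c < x\<close>] 1 by (simp add: mult_left_mono_neg)
      then show ?thesis using c \<open>c < x\<close> by linarith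
    next
      case 2
      have "0 < a * fG c" using 2 fG_pos[of c] by simp
      then have cp: "0 < c" using c by linarith
      have "fG x / x < fG c / c" by (rule ratio_dec[OF cp \<open>c < x\<close>])
      then have "c * fG x < x * fG c" using cp \<open>c < x\<close> by (simp add: field_simps)
      then have "a * (c * fG x) < a * (x * fG c)" using 2 by simp
      moreover have "a * (x * fG c) = x * c"
          by (simp only: mult.left_commute[of a x] c[symmetric])
      moreover have "a * (c * fG x) = c * (a * fG x)" by (simp add: mult.left_commute)
      ultimately have "c * (a * fG x) < x * c" by simp
      then show ?thesis using cp by (simp add: mult.commute)
    qed
  }
qed

lemma K_pos: "0 < 2 * U x / (D x * sqrt (D x))"
  using U_pos[of x] D_pos[of x] by simp

theorem mainTheorem4:
  fixes \<alpha> :: real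
  shows "\<exists>c. (\<forall>x. rG \<alpha> x \<le> rG \<alpha> c)
            \<and> (\<forall>c'. (\<forall>x. rG \<alpha> x \<le> rG \<alpha> c') \<longrightarrow> c' = c)
            \<and> c = \<alpha> * fG c
            \<and> (\<forall>y. y = \<alpha> * fG y \<longrightarrow> y = c)"
proof -
  obtain c where c: "c = \<alpha> * fG c" using fixpoint_exists by blast
  let ?r' = "\<lambda>x. 2 * U x / (D x * sqrt (D x)) * (\<alpha> * fG x - x)"
  have der: "\<And>x. (rG \<alpha> has_real_derivative ?r' x) (at x)" by (rule R_deriv)
  have lt: "rG \<alpha> x < rG \<alpha> c" if "x \<noteq> c" for x
  proof (cases "x < c")
    case True
    obtain z where z: "x < z" "z < c" "rG \<alpha> c - rG \<alpha> x = (c - x) * ?r' z"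
      using MVT2[OF True der] by blast
    have pos: "0 < ?r' z"
      using K_pos[of z] sign_structure(1)[OF c z(2)] by (intro mult_pos_pos) auto
    have "0 < (c - x) * ?r' z"
      by (rule mult_pos_pos) (use True pos in auto)
    then show ?thesis using z(3) by simp
  next
    case False
    then have cx: "c < x" using that by simp
    obtain z where z: "c < z" "z < x" "rG \<alpha> x - rG \<alpha> c = (x - c) * ?r' z"
      using MVT2[OF cx der] by blast
    have neg: "?r' z < 0"
      using K_pos[of z] sign_structure(2)[OF c z(1)] by (intro mult_pos_neg) auto
    have "(x - c) * ?r' z < 0"
      by (rule mult_pos_neg) (use cx neg in auto)
    then show ?thesis using z(3) by simp
  qed
  have fp: "y = c" if "y = \<alpha> * fG y" for y
  proof (rule ccontr)
    assume "y \<noteq> c"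
    then consider "y < c" | "c < y" by linarith
    then show False
    proof cases
      case 1 then show False using sign_structure(1)[OF c 1] that by linarith
    next
      case 2 then show False using sign_structure(2)[OF c 2] that by linarith
    qed
  qed
  show ?thesis
  proof (intro exI[of _ c] conjI allI impI)
    show "rG \<alpha> x \<le> rG \<alpha> c" for x using lt[of x] by (cases "x = c") auto
    show "c' = c" if "\<forall>x. rG \<alpha> x \<le> rG \<alpha> c'" for c'
    proof (rule ccontr)
      assume "c' \<noteq> c"
      then have "rG \<alpha> c' < rG \<alpha> c" by (rule lt)
      moreover have "rG \<alpha> c \<le> rG \<alpha> c'" using that by blast
      ultimately show False by simp
    qed
    show "c = \<alpha> * fG c" by (rule c)
    show "y = c" if "y = \<alpha> * fG y" for y using fp[OF that] .
  qed
qed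

end
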